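(* Let $m \ge 2$ and $n \ge 2m$ be integers. Then for every real $r$ with $|r|<1$, $$\int_{-1}^1 \frac{U_n(s)(1-s^2)^{m-\frac{1}{2}}}{(s-r)^3}\,ds = (-1)^{m}\left(\frac{1}{2}\right)^{2m}\frac{\pi}{1-r^2}\sum_{j=0}^{2m-2}(-1)^j\binom{2m-2}{j}(n+3-2m+2j)\Big[(n+4-2m+2j)U_{n+1-2m+2j}(r)-(n+2-2m+2j)U_{n+3-2m+2j}(r)\Big],$$ where the integral is a Hadamard finite-part integral.
   Context: $U_k(s)=\frac{\sin((k+1)\cos^{-1}s)}{\sin(\cos^{-1}s)}$ is the Tchebyshev polynomial of the second kind. For a positive integer $\alpha\ge 2$ and $|r|<1$, the integral $\int_{-1}^1 \frac{D(s)}{(s-r)^\alpha}ds$ is understood in the Hadamard finite-part sense; in particular it satisfies $\int_{-1}^1 \frac{D(s)}{(s-r)^{\alpha}}ds=\frac{1}{\alpha-1}\frac{d}{dr}\int_{-1}^1\frac{D(s)}{(s-r)^{\alpha-1}}ds$, where for $\alpha-1=1$ the right-hand integral is a Cauchy principal value. $\binom{a}{j}=\frac{a!}{j!(a-j)!}$. *)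

theory Defs
  imports "HOL-Analysis.Analysis"
begin

definition chebU :: "nat \<Rightarrow> real \<Rightarrow> real" where
  "chebU k s = sin (real (k + 1) * arccos s) / sin (arccos s)"

definition cpv :: "(real \<Rightarrow> real) \<Rightarrow> real \<Rightarrow> real" where
  "cpv D r = Lim (at_right 0)
     (\<lambda>\<epsilon>. integral {-1..r - \<epsilon>} (\<lambda>s. D s / (s - r))
         + integral {r + \<epsilon>..1} (\<lambda>s. D s / (s - r)))"

text \<open>Hadamard finite-part integral of D(s)/(s-r)^alpha over [-1,1], alpha >= 1,
  via the recursion: alpha = 1 is the Cauchy principal value, and
  FP_alpha(r) = 1/(alpha-1) d/dr FP_(alpha-1)(r).\<close>
fun hfp :: "nat \<Rightarrow> (real \<Rightarrow> real) \<Rightarrow> real \<Rightarrow> real" where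
  "hfp 0 D r = integral {-1..1} D"
| "hfp (Suc 0) D r = cpv D r"
| "hfp (Suc (Suc k)) D r = (1 / real (Suc k)) * deriv (hfp (Suc k) D) r"

end

theory Submission
  imports Defs
begin


definition K0 :: "real \<Rightarrow> real \<Rightarrow> real" where
 "K0 r s = sqrt(1-s^2) - r * arcsin s - sqrt(1-r^2) * ln(1 - r * s + sqrt(1-r^2) * sqrt(1-s^2))"

definition H0 :: "real \<Rightarrow> real \<Rightarrow> real" where
 "H0 r s = K0 r s + sqrt(1-r^2) * ln((s-r)^2) / 2"

lemma H0_pos: assumes "\<bar>r\<bar> < 1" "-1 \<le> s" "s \<le> 1"
  shows "0 < 1 - r * s + sqrt(1-r^2) * sqrt(1-s^2)"
proof -
  have "\<bar>s\<bar> \<le> 1" using assms by auto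
  hence "\<bar>r * s\<bar> \<le> \<bar>r\<bar>" using mult_left_le[of "\<bar>s\<bar>" "\<bar>r\<bar>"] by (simp add: abs_mult)
  hence "\<bar>r * s\<bar> < 1" using assms by linarith
  moreover have "0 \<le> sqrt(1-r^2) * sqrt(1-s^2)" using assms by (simp add: abs_square_le_1)
  ultimately show ?thesis by linarith
qed

lemma t1: fixes s r c w P :: real
  assumes w2: "w^2 = 1 - s^2" and c2: "c^2 = 1 - r^2" and nz: "w \<noteq> 0" "P \<noteq> 0" "s - r \<noteq> 0"
   and P: "P = 1 - r * s + c * w"
  shows "(-(2 * s)/(2 * w) - r * (1/w) - c * ((-r + c * (-(2 * s)/(2 * w)))/P) + c * ((2 * (s-r))/(s-r)^2)/2) = w/(s-r)"
proof -
  have nz2: "(s-r)^2 \<noteq> 0" using nz by simp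
  have gen: "\<And>x c::real. x \<noteq> 0 \<Longrightarrow> c * ((2 * x)/x^2)/2 = c/x" by (simp add: power2_eq_square)
  have e1: "c * ((2 * (s-r))/(s-r)^2)/2 = c/(s-r)" using gen[OF nz(3)] .
  have e2: "-(2 * s)/(2 * w) = -s/w" by simp
  have "(-(2 * s)/(2 * w) - r * (1/w) - c * ((-r + c * (-(2 * s)/(2 * w)))/P) + c * ((2 * (s-r))/(s-r)^2)/2)
     = -s/w - r * (1/w) - c * ((-r + c * (-s/w))/P) + c/(s-r)" unfolding e1 e2 by simp
  also have "\<dots> = (-(s+r) * P * (s-r) + c * (r * w + c * s) * (s-r) + c * w * P) / (w * P * (s-r))"
    using nz by (simp add: field_simps)
  also have "(-(s+r) * P * (s-r) + c * (r * w + c * s) * (s-r) + c * w * P) = w^2 * P"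
    using w2 c2 P by algebra
  finally show ?thesis using nz by (simp add: power2_eq_square)
qed

lemma H0_deriv: assumes "\<bar>r\<bar> < 1" "-1 < s" "s < 1" "s \<noteq> r"
  shows "(H0 r has_real_derivative sqrt(1-s^2)/(s-r)) (at s)"
proof -
  define c where "c = sqrt(1-r^2)"
  define w where "w = sqrt(1-s^2)"
  have s2: "0 < 1 - s^2" using assms by (simp add: abs_square_less_1)
  have r2: "0 < 1 - r^2" using assms by (simp add: abs_square_less_1)
  have w2: "w^2 = 1 - s^2" "w > 0" using s2 by (auto simp: w_def)
  have c2: "c^2 = 1 - r^2" "c > 0" using r2 by (auto simp: c_def)
  have P: "0 < 1 - r * s + c * w" using H0_pos[of r s] assms by (simp add: c_def w_def)
  have sr: "(s-r)^2 > 0" using assms by simp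
  have dw: "((\<lambda>s. sqrt(1-s^2)) has_real_derivative (-(2 * s)/(2 * w))) (at s)"
    unfolding w_def
    using s2 by (auto intro!: derivative_eq_intros simp: field_simps)
  have da: "(arcsin has_real_derivative 1/w) (at s)"
    unfolding w_def using DERIV_arcsin[of s] assms by (simp add: inverse_eq_divide)
  have dl: "((\<lambda>s. ln(1 - r * s + c * sqrt(1-s^2))) has_real_derivative
       ((-r + c * (-(2 * s)/(2 * w)))/(1 - r * s + c * w))) (at s)"
    unfolding w_def using s2 P by (auto intro!: derivative_eq_intros simp: w_def inverse_eq_divide)
  have dq: "((\<lambda>s. ln((s-r)^2)) has_real_derivative (2 * (s-r))/(s-r)^2) (at s)"
    using sr by (auto intro!: derivative_eq_intros simp: inverse_eq_divide)
  have D: "(H0 r has_real_derivative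
      (-(2 * s)/(2 * w) - r * (1/w) - c * ((-r + c * (-(2 * s)/(2 * w)))/(1 - r * s + c * w)) + c * ((2 * (s-r))/(s-r)^2)/2)) (at s)"
    unfolding H0_def K0_def c_def[symmetric]
    apply (rule DERIV_add)
     apply (rule DERIV_diff)
      apply (rule DERIV_diff)
       apply (rule dw)
      apply (rule DERIV_cmult, rule da)
     apply (rule DERIV_cmult, rule dl)
    apply (rule DERIV_cdivide, rule DERIV_cmult, rule dq)
    done
  have eq: "(-(2 * s)/(2 * w) - r * (1/w) - c * ((-r + c * (-(2 * s)/(2 * w)))/(1 - r * s + c * w)) + c * ((2 * (s-r))/(s-r)^2)/2) = w/(s-r)"
    by (rule t1[OF w2(1) c2(1)]) (use w2 P assms in auto)
  show ?thesis using D eq by (simp add: w_def)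
qed

lemma K0_cont: assumes "\<bar>r\<bar> < 1" shows "continuous_on {-1..1} (K0 r)"
  unfolding K0_def using H0_pos[OF assms]
  by (intro continuous_intros) (auto simp: less_imp_neq[symmetric] intro!: less_imp_neq[symmetric])

lemma H0_cont: assumes "\<bar>r\<bar> < 1" "r \<notin> {a..b}" "{a..b} \<subseteq> {-1..1}"
  shows "continuous_on {a..b} (H0 r)"
proof -
  have "continuous_on {a..b} (K0 r)" using K0_cont[OF assms(1)] assms(3) by (rule continuous_on_subset)
  moreover have "continuous_on {a..b} (\<lambda>s. sqrt(1-r^2) * ln((s-r)^2) / 2)"
    using assms(2) by (intro continuous_intros) auto
  ultimately show ?thesis unfolding H0_def by (rule continuous_on_add)
qed

lemma H0_int_left: assumes "\<bar>r\<bar> < 1" "0 < e" "-1 \<le> r - e"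
  shows "integral {-1..r-e} (\<lambda>s. sqrt(1-s^2)/(s-r)) = H0 r (r-e) - H0 r (-1)"
proof (rule integral_unique, rule fundamental_theorem_of_calculus_interior)
  show "-1 \<le> r - e" by fact
  show "continuous_on {-1..r-e} (H0 r)" using assms by (intro H0_cont) auto
  fix x assume "x \<in> {-1<..<r-e}"
  then show "(H0 r has_vector_derivative sqrt(1-x^2)/(x-r)) (at x)"
    using assms by (intro H0_deriv[unfolded has_real_derivative_iff_has_vector_derivative]) auto
qed

lemma H0_int_right: assumes "\<bar>r\<bar> < 1" "0 < e" "r + e \<le> 1"
  shows "integral {r+e..1} (\<lambda>s. sqrt(1-s^2)/(s-r)) = H0 r 1 - H0 r (r+e)"
proof (rule integral_unique, rule fundamental_theorem_of_calculus_interior)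
  show "r + e \<le> 1" by fact
  show "continuous_on {r+e..1} (H0 r)" using assms by (intro H0_cont) auto
  fix x assume "x \<in> {r+e<..<1}"
  then show "(H0 r has_vector_derivative sqrt(1-x^2)/(x-r)) (at x)"
    using assms by (intro H0_deriv[unfolded has_real_derivative_iff_has_vector_derivative]) auto
qed

lemma H0_ends: assumes "\<bar>r\<bar> < 1" shows "H0 r 1 = -r * pi/2" "H0 r (-1) = r * pi/2"
proof -
  have a: "1 - r > 0" "1 + r > 0" using assms by auto
  have b: "(1 - r)^2 = (1-r)^2" "(-1 - r)^2 = (1 + r)^2" by (auto simp: power2_eq_square algebra_simps)
  show "H0 r 1 = -r * pi/2" unfolding H0_def K0_def using a by (simp add: ln_realpow)
  show "H0 r (-1) = r * pi/2" unfolding H0_def K0_def using a b by (simp add: ln_realpow)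
qed

lemma H0_mid: "H0 r (r-e) - H0 r (r+e) = K0 r (r-e) - K0 r (r+e)"
  unfolding H0_def by simp

lemma PV0: assumes "\<bar>r\<bar> < 1"
  shows "((\<lambda>e. integral {-1..r-e} (\<lambda>s. sqrt(1-s^2)/(s-r)) + integral {r+e..1} (\<lambda>s. sqrt(1-s^2)/(s-r)))
     \<longlongrightarrow> -pi * r) (at_right 0)"
proof -
  have ic: "isCont (K0 r) r"
    using K0_cont[OF assms] continuous_on_eq_continuous_at[of "{-1<..<1}" "K0 r"] assms
    by (metis continuous_on_subset greaterThanLessThan_iff greaterThanAtMost_iff abs_less_iff
          atLeastAtMost_iff greaterThanLessThan_subseteq_atLeastAtMost_iff le_less minus_less_iff open_greaterThanLessThan order_refl)
  have l1: "((\<lambda>e. K0 r (r - e)) \<longlongrightarrow> K0 r r) (at_right 0)"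
    by (rule isCont_tendsto_compose[OF ic]) (auto intro!: tendsto_eq_intros)
  have l2: "((\<lambda>e. K0 r (r + e)) \<longlongrightarrow> K0 r r) (at_right 0)"
    by (rule isCont_tendsto_compose[OF ic]) (auto intro!: tendsto_eq_intros)
  have l: "((\<lambda>e. K0 r (r - e) - K0 r (r + e) - r * pi) \<longlongrightarrow> -pi * r) (at_right 0)"
    using tendsto_diff[OF tendsto_diff[OF l1 l2] tendsto_const[of "r * pi"]] by (simp add: mult.commute)
  have ev: "eventually (\<lambda>e. e \<in> {0<..<1 - \<bar>r\<bar>}) (at_right 0)"
    using assms by (intro eventually_at_right_real) auto
  show ?thesis
  proof (rule Lim_transform_eventually[OF l], rule eventually_mono[OF ev])
    fix e assume e: "e \<in> {0<..<1 - \<bar>r\<bar>}"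
    have "integral {-1..r-e} (\<lambda>s. sqrt(1-s^2)/(s-r)) + integral {r+e..1} (\<lambda>s. sqrt(1-s^2)/(s-r))
       = (H0 r (r-e) - H0 r (-1)) + (H0 r 1 - H0 r (r+e))"
      using e assms by (subst H0_int_left H0_int_right, auto)+
    also have "\<dots> = K0 r (r - e) - K0 r (r + e) - r * pi"
      using H0_mid[of r e] H0_ends[OF assms] by simp
    finally show "K0 r (r - e) - K0 r (r + e) - r * pi = integral {-1..r-e} (\<lambda>s. sqrt(1-s^2)/(s-r)) + integral {r+e..1} (\<lambda>s. sqrt(1-s^2)/(s-r))" by simp
  qed
qed


definition fk :: "nat \<Rightarrow> real \<Rightarrow> real" where
  "fk k s = sin (real (k+1) * arccos s)"

definition Ek :: "(real \<Rightarrow> real) \<Rightarrow> real \<Rightarrow> real \<Rightarrow> real" where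
  "Ek f r e = integral {-1..r-e} (\<lambda>s. f s / (s - r)) + integral {r+e..1} (\<lambda>s. f s / (s - r))"

definition Ik :: "(real \<Rightarrow> real) \<Rightarrow> real \<Rightarrow> real \<Rightarrow> real" where
  "Ik f r e = integral {-1..r-e} f + integral {r+e..1} f"

definition Gk :: "nat \<Rightarrow> real \<Rightarrow> real" where
  "Gk k t = (if k = 0 then t/2 else sin (real k * t) / (2 * real k))"

definition Fk :: "nat \<Rightarrow> real \<Rightarrow> real" where
  "Fk k t = sin (real (k+2) * t) / (2 * real (k+2)) - Gk k t"

lemma Gk_deriv: "(Gk k has_real_derivative cos (real k * t) / 2) (at t)"
proof (cases "k = 0")
  case True
  then show ?thesis unfolding Gk_def by (auto intro!: derivative_eq_intros)
next
  case False
  then show ?thesis unfolding Gk_def by (auto intro!: derivative_eq_intros)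
qed

lemma Fk_deriv: "(Fk k has_real_derivative (cos (real (k+2) * t) - cos (real k * t)) / 2) (at t)"
proof -
  have "((\<lambda>t. sin (real (k+2) * t)) has_real_derivative cos (real (k+2) * t) * real (k+2)) (at t)"
    by (auto intro!: derivative_eq_intros)
  from DERIV_cdivide[OF this, of "2 * real (k+2)"]
  have "((\<lambda>t. sin (real (k+2) * t) / (2 * real (k+2))) has_real_derivative cos (real (k+2) * t) * real (k+2) / (2 * real (k+2))) (at t)" .
  moreover have "\<And>a c::real. c \<noteq> 0 \<Longrightarrow> a * c / (2 * c) = a / 2" by simp
  ultimately have "((\<lambda>t. sin (real (k+2) * t) / (2 * real (k+2))) has_real_derivative cos (real (k+2) * t) / 2) (at t)"
    by (metis of_nat_eq_0_iff add_eq_0_iff_both_eq_0 zero_neq_numeral)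
  from DERIV_diff[OF this Gk_deriv[of k t]] show ?thesis
    unfolding Fk_def by (simp add: diff_divide_distrib)
qed

lemma cos_diff_id: "cos (real (k+2) * t) - cos (real k * t) = -2 * sin (real (k+1) * t) * sin t"
proof -
  have a: "real (k+2) * t = real (k+1) * t + t" by (simp add: algebra_simps)
  have b: "real k * t = real (k+1) * t - t" by (simp add: algebra_simps)
  show ?thesis unfolding a b cos_add cos_diff by simp
qed

lemma Phi_deriv: assumes "-1 < s" "s < 1"
  shows "((\<lambda>s. Fk k (arccos s)) has_real_derivative fk k s) (at s)"
proof -
  have w: "sqrt (1 - s^2) > 0" "sin (arccos s) = sqrt (1 - s^2)"
    using assms by (auto simp: abs_square_less_1 sin_arccos)
  have D: "((\<lambda>s. Fk k (arccos s)) has_real_derivative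
     (cos (real (k+2) * arccos s) - cos (real k * arccos s)) / 2 * inverse (- sqrt (1 - s^2))) (at s)"
    by (rule DERIV_chain2[OF Fk_deriv DERIV_arccos[OF assms]])
  have "(cos (real (k+2) * arccos s) - cos (real k * arccos s)) / 2 * inverse (- sqrt (1 - s^2)) = fk k s"
    unfolding cos_diff_id fk_def using w by (simp add: field_simps)
  with D show ?thesis by metis
qed

lemma Fk_cont: "continuous_on UNIV (Fk k)"
  by (rule continuous_at_imp_continuous_on) (auto intro: DERIV_isCont[OF Fk_deriv])

lemma Phi_cont: "continuous_on {-1..1} (\<lambda>s. Fk k (arccos s))"
  by (rule continuous_on_compose2[OF Fk_cont continuous_on_arccos']) auto

lemma Phi_int: assumes "-1 \<le> a" "a \<le> b" "b \<le> 1"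
  shows "integral {a..b} (fk k) = Fk k (arccos b) - Fk k (arccos a)"
proof (rule integral_unique, rule fundamental_theorem_of_calculus_interior)
  show "a \<le> b" by fact
  show "continuous_on {a..b} (\<lambda>s. Fk k (arccos s))"
    by (rule continuous_on_subset[OF Phi_cont]) (use assms in auto)
  fix x assume "x \<in> {a<..<b}"
  then show "((\<lambda>s. Fk k (arccos s)) has_vector_derivative fk k x) (at x)"
    using assms by (intro Phi_deriv[unfolded has_real_derivative_iff_has_vector_derivative]) auto
qed

lemma Fk_ends: "Fk k 0 = 0" "Fk k pi = (if k = 0 then - pi/2 else 0)"
proof -
  show "Fk k 0 = 0" unfolding Fk_def Gk_def by simp
  have "sin (real (k+2) * pi) = 0" by (rule sin_npi)
  moreover have "sin (real k * pi) = 0" by (rule sin_npi)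
  ultimately show "Fk k pi = (if k = 0 then - pi/2 else 0)" unfolding Fk_def Gk_def by simp
qed

lemma Ik_lim: assumes "\<bar>r\<bar> < 1"
  shows "(Ik (fk k) r \<longlongrightarrow> (if k = 0 then pi/2 else 0)) (at_right 0)"
proof -
  let ?P = "\<lambda>s. Fk k (arccos s)"
  have "continuous_on {-1<..<1} ?P" by (rule continuous_on_subset[OF Phi_cont]) auto
  then have "\<forall>x\<in>{-1<..<1}. isCont ?P x" by (subst (asm) continuous_on_eq_continuous_at) auto
  moreover have "r \<in> {-1<..<1}" using assms by auto
  ultimately have ic: "isCont ?P r" by blast
  have l1: "((\<lambda>e. ?P (r - e)) \<longlongrightarrow> ?P r) (at_right 0)"
    by (rule isCont_tendsto_compose[OF ic]) (auto intro!: tendsto_eq_intros)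
  have l2: "((\<lambda>e. ?P (r + e)) \<longlongrightarrow> ?P r) (at_right 0)"
    by (rule isCont_tendsto_compose[OF ic]) (auto intro!: tendsto_eq_intros)
  have l: "((\<lambda>e. (?P (r - e) - ?P (-1)) + (?P 1 - ?P (r + e))) \<longlongrightarrow> (?P r - ?P (-1)) + (?P 1 - ?P r)) (at_right 0)"
    by (intro tendsto_intros l1 l2)
  have v: "(?P r - ?P (-1)) + (?P 1 - ?P r) = (if k = 0 then pi/2 else 0)"
    using Fk_ends[of k] by simp
  have ev: "eventually (\<lambda>e. e \<in> {0<..<1 - \<bar>r\<bar>}) (at_right 0)"
    using assms by (intro eventually_at_right_real) auto
  show ?thesis
  proof (rule Lim_transform_eventually[OF l[unfolded v]], rule eventually_mono[OF ev])
    fix e assume e: "e \<in> {0<..<1 - \<bar>r\<bar>}"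
    show "(?P (r - e) - ?P (-1)) + (?P 1 - ?P (r + e)) = Ik (fk k) r e"
      unfolding Ik_def using e assms by (subst Phi_int, auto)+
  qed
qed

lemma fk_cont: "continuous_on {-1..1} (fk k)"
  unfolding fk_def by (intro continuous_intros) auto

lemma fk_int: assumes "{a..b} \<subseteq> {-1..1}" shows "fk k integrable_on {a..b}"
  by (rule integrable_continuous_interval, rule continuous_on_subset[OF fk_cont assms])

lemma fkq_int: assumes "{a..b} \<subseteq> {-1..1}" "r \<notin> {a..b}"
  shows "(\<lambda>s. fk k s / (s - r)) integrable_on {a..b}"
proof (rule integrable_continuous_interval)
  show "continuous_on {a..b} (\<lambda>s. fk k s / (s - r))"
    using assms by (intro continuous_intros continuous_on_subset[OF fk_cont assms(1)]) auto
qed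

lemma fk_rec: assumes "-1 \<le> s" "s \<le> 1"
  shows "fk (k+2) s = 2 * s * fk (k+1) s - fk k s"
proof -
  define t where "t = arccos s"
  define x where "x = real (k+2) * t"
  have a: "fk (k+2) s = sin (x + t)" unfolding fk_def x_def t_def by (simp add: algebra_simps)
  have b: "fk (k+1) s = sin x" unfolding fk_def x_def t_def by (simp add: algebra_simps)
  have c: "fk k s = sin (x - t)" unfolding fk_def x_def t_def by (simp add: algebra_simps)
  have d: "cos t = s" unfolding t_def using assms by simp
  show ?thesis unfolding a b c sin_add sin_diff d by simp
qed

lemma fk_1: assumes "-1 \<le> s" "s \<le> 1" shows "fk 1 s = 2 * s * fk 0 s"
  unfolding fk_def using assms by (simp add: sin_double)

lemma fk_0: assumes "-1 \<le> s" "s \<le> 1" shows "fk 0 s = sqrt (1 - s^2)"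
  unfolding fk_def using assms by (simp add: sin_arccos)



lemma aux: "x \<noteq> 0 \<Longrightarrow> (2 * (x + r) * a - b) / x = 2 * a + 2 * r * (a / x) - b / (x::real)"
  by (simp add: field_simps)

lemma Jrec:
  fixes h f1 f0 :: "real \<Rightarrow> real" and a b r :: real
  assumes sub: "{a..b} \<subseteq> {-1..1}" and rn: "r \<notin> {a..b}"
    and h: "\<And>s. -1 \<le> s \<Longrightarrow> s \<le> 1 \<Longrightarrow> h s = 2 * s * f1 s - f0 s"
    and i1: "f1 integrable_on {a..b}" and i2: "(\<lambda>s. f1 s / (s - r)) integrable_on {a..b}"
    and i3: "(\<lambda>s. f0 s / (s - r)) integrable_on {a..b}"
  shows "integral {a..b} (\<lambda>s. h s / (s - r)) =
    2 * integral {a..b} f1 + 2 * r * integral {a..b} (\<lambda>s. f1 s / (s - r)) - integral {a..b} (\<lambda>s. f0 s / (s - r))"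
proof -
  have "integral {a..b} (\<lambda>s. h s / (s - r)) = integral {a..b} (\<lambda>s. (2 * f1 s + 2 * r * (f1 s / (s - r))) - f0 s / (s - r))"
  proof (rule integral_cong)
    fix s assume s: "s \<in> {a..b}"
    then have "s - r \<noteq> 0" using rn by auto
    moreover have "-1 \<le> s" "s \<le> 1" using s sub by auto
    ultimately show "h s / (s - r) = (2 * f1 s + 2 * r * (f1 s / (s - r))) - f0 s / (s - r)"
      unfolding h[OF \<open>-1 \<le> s\<close> \<open>s \<le> 1\<close>] using aux[of "s - r" r "f1 s" "f0 s"] by simp
  qed
  also have "\<dots> = integral {a..b} (\<lambda>s. 2 * f1 s + 2 * r * (f1 s / (s - r))) - integral {a..b} (\<lambda>s. f0 s / (s - r))"
    by (rule integral_diff) (intro integrable_add integrable_on_mult_right i1 i2 i3)+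
  also have "integral {a..b} (\<lambda>s. 2 * f1 s + 2 * r * (f1 s / (s - r))) = 2 * integral {a..b} f1 + 2 * r * integral {a..b} (\<lambda>s. f1 s / (s - r))"
  proof -
    have "integral {a..b} (\<lambda>s. 2 * f1 s + 2 * r * (f1 s / (s - r))) = integral {a..b} (\<lambda>s. 2 * f1 s) + integral {a..b} (\<lambda>s. 2 * r * (f1 s / (s - r)))"
      by (rule integral_add) (intro integrable_on_mult_right i1 i2)+
    then show ?thesis by (simp only: integral_mult_right)
  qed
  finally show ?thesis .
qed

lemma intervals: fixes r e :: real assumes "\<bar>r\<bar> < 1" "0 < e"
  shows "{-1..r-e} \<subseteq> {-1..1}" "r \<notin> {-1..r-e}" "{r+e..1} \<subseteq> {-1..1}" "r \<notin> {r+e..1}"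
proof -
  have "r < 1" "-1 < r" using assms abs_less_iff[of r 1] by auto
  then show "{-1..r-e} \<subseteq> {-1..1}" "r \<notin> {-1..r-e}" "{r+e..1} \<subseteq> {-1..1}" "r \<notin> {r+e..1}"
    using assms(2) by auto
qed

lemma Ek_rec: assumes "\<bar>r\<bar> < 1" "0 < e"
  shows "Ek (fk (k+2)) r e = 2 * Ik (fk (k+1)) r e + 2 * r * Ek (fk (k+1)) r e - Ek (fk k) r e"
proof -
  note iv = intervals[OF assms]
  have L: "integral {-1..r-e} (\<lambda>s. fk (k+2) s / (s - r)) = 2 * integral {-1..r-e} (fk (k+1)) + 2 * r * integral {-1..r-e} (\<lambda>s. fk (k+1) s / (s - r)) - integral {-1..r-e} (\<lambda>s. fk k s / (s - r))"
    by (rule Jrec[OF iv(1,2) fk_rec fk_int[OF iv(1)] fkq_int[OF iv(1,2)] fkq_int[OF iv(1,2)]])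
  have R: "integral {r+e..1} (\<lambda>s. fk (k+2) s / (s - r)) = 2 * integral {r+e..1} (fk (k+1)) + 2 * r * integral {r+e..1} (\<lambda>s. fk (k+1) s / (s - r)) - integral {r+e..1} (\<lambda>s. fk k s / (s - r))"
    by (rule Jrec[OF iv(3,4) fk_rec fk_int[OF iv(3)] fkq_int[OF iv(3,4)] fkq_int[OF iv(3,4)]])
  show ?thesis unfolding Ek_def Ik_def L R by (simp add: algebra_simps)
qed

lemma Ek_1: assumes "\<bar>r\<bar> < 1" "0 < e"
  shows "Ek (fk 1) r e = 2 * Ik (fk 0) r e + 2 * r * Ek (fk 0) r e"
proof -
  note iv = intervals[OF assms]
  have L: "integral {-1..r-e} (\<lambda>s. fk 1 s / (s - r)) = 2 * integral {-1..r-e} (fk 0) + 2 * r * integral {-1..r-e} (\<lambda>s. fk 0 s / (s - r)) - integral {-1..r-e} (\<lambda>s. (\<lambda>_. 0) s / (s - r))"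
    apply (rule Jrec[OF iv(1,2)])
    subgoal for s using fk_1[of s] by simp
    subgoal by (rule fk_int[OF iv(1)])
    subgoal by (rule fkq_int[OF iv(1,2)])
    subgoal by (simp add: integrable_0)
    done
  have R: "integral {r+e..1} (\<lambda>s. fk 1 s / (s - r)) = 2 * integral {r+e..1} (fk 0) + 2 * r * integral {r+e..1} (\<lambda>s. fk 0 s / (s - r)) - integral {r+e..1} (\<lambda>s. (\<lambda>_. 0) s / (s - r))"
    apply (rule Jrec[OF iv(3,4)])
    subgoal for s using fk_1[of s] by simp
    subgoal by (rule fk_int[OF iv(3)])
    subgoal by (rule fkq_int[OF iv(3,4)])
    subgoal by (simp add: integrable_0)
    done
  show ?thesis unfolding Ek_def Ik_def L R by (simp add: algebra_simps)
qed

lemma ev_pos: "eventually (\<lambda>e::real. 0 < e) (at_right 0)"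
  by (simp add: eventually_at_right_less)

lemma Ek_0_lim: assumes "\<bar>r\<bar> < 1" shows "(Ek (fk 0) r \<longlongrightarrow> -pi * r) (at_right 0)"
proof (rule Lim_transform_eventually[OF PV0[OF assms]], rule eventually_mono[OF ev_pos])
  fix e :: real assume e: "0 < e"
  have "integral {-1..r-e} (\<lambda>s. sqrt (1 - s^2) / (s - r)) = integral {-1..r-e} (\<lambda>s. fk 0 s / (s - r))"
  proof (rule integral_cong)
    fix x assume "x \<in> {-1..r-e}"
    then have "-1 \<le> x" "x \<le> 1" using assms e by (auto simp: abs_less_iff)
    then show "sqrt (1 - x^2) / (x - r) = fk 0 x / (x - r)" using fk_0[of x] by simp
  qed
  moreover have "integral {r+e..1} (\<lambda>s. sqrt (1 - s^2) / (s - r)) = integral {r+e..1} (\<lambda>s. fk 0 s / (s - r))"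
  proof (rule integral_cong)
    fix x assume "x \<in> {r+e..1}"
    then have "-1 \<le> x" "x \<le> 1" using assms e by (auto simp: abs_less_iff)
    then show "sqrt (1 - x^2) / (x - r) = fk 0 x / (x - r)" using fk_0[of x] by simp
  qed
  ultimately show "integral {-1..r-e} (\<lambda>s. sqrt (1 - s^2) / (s - r)) + integral {r+e..1} (\<lambda>s. sqrt (1 - s^2) / (s - r)) = Ek (fk 0) r e"
    unfolding Ek_def by simp
qed

lemma PVk: assumes "\<bar>r\<bar> < 1"
  shows "(Ek (fk k) r \<longlongrightarrow> -pi * cos (real (k+1) * arccos r)) (at_right 0)"
proof -
  let ?t = "arccos r"
  have cr: "cos ?t = r" using assms by simp
  have "(Ek (fk k) r \<longlongrightarrow> -pi * cos (real (k+1) * ?t)) (at_right 0) \<and>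
        (Ek (fk (k+1)) r \<longlongrightarrow> -pi * cos (real (k+2) * ?t)) (at_right 0)"
  proof (induction k)
    case 0
    have a: "(Ek (fk 0) r \<longlongrightarrow> -pi * cos (real (0+1) * ?t)) (at_right 0)"
      using Ek_0_lim[OF assms] cr by simp
    have l: "((\<lambda>e. 2 * Ik (fk 0) r e + 2 * r * Ek (fk 0) r e) \<longlongrightarrow> 2 * (pi/2) + 2 * r * (-pi * r)) (at_right 0)"
    proof -
      have I0: "(Ik (fk 0) r \<longlongrightarrow> pi/2) (at_right 0)" using Ik_lim[OF assms, of 0] by simp
      show ?thesis by (intro tendsto_add tendsto_mult tendsto_const I0 Ek_0_lim[OF assms])
    qed
    have v: "2 * (pi/2) + 2 * r * (-pi * r) = -pi * cos (real (0+2) * ?t)"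
    proof -
      have c2: "cos (real (0+2) * ?t) = 2 * r^2 - 1" using cos_double_cos[of ?t] cr by simp
      show ?thesis unfolding c2 by (simp add: algebra_simps power2_eq_square)
    qed
    have b: "(Ek (fk (0+1)) r \<longlongrightarrow> -pi * cos (real (0+2) * ?t)) (at_right 0)"
      by (rule Lim_transform_eventually[OF l[unfolded v]], rule eventually_mono[OF ev_pos])
         (use Ek_1[OF assms] in simp)
    show ?case using a b by simp
  next
    case (Suc k)
    have l: "((\<lambda>e. 2 * Ik (fk (k+1)) r e + 2 * r * Ek (fk (k+1)) r e - Ek (fk k) r e) \<longlongrightarrow>
        2 * 0 + 2 * r * (-pi * cos (real (k+2) * ?t)) - (-pi * cos (real (k+1) * ?t))) (at_right 0)"
    proof -
      have I1: "(Ik (fk (k+1)) r \<longlongrightarrow> 0) (at_right 0)" using Ik_lim[OF assms, of "k+1"] by simp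
      show ?thesis by (intro tendsto_add tendsto_diff tendsto_mult tendsto_const I1 conjunct1[OF Suc.IH] conjunct2[OF Suc.IH])
    qed
    have id: "cos (real (k+3) * ?t) = 2 * r * cos (real (k+2) * ?t) - cos (real (k+1) * ?t)"
    proof -
      define x where "x = real (k+2) * ?t"
      have a: "real (k+3) * ?t = x + ?t" unfolding x_def by (simp add: algebra_simps)
      have b: "real (k+1) * ?t = x - ?t" unfolding x_def by (simp add: algebra_simps)
      show ?thesis unfolding a b x_def[symmetric] cos_add cos_diff cr by simp
    qed
    have v: "2 * 0 + 2 * r * (-pi * cos (real (k+2) * ?t)) - (-pi * cos (real (k+1) * ?t)) = -pi * cos (real (k+3) * ?t)"
      unfolding id by (simp add: algebra_simps)
    have b: "(Ek (fk (k+2)) r \<longlongrightarrow> -pi * cos (real (k+3) * ?t)) (at_right 0)"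
      by (rule Lim_transform_eventually[OF l[unfolded v]], rule eventually_mono[OF ev_pos])
         (use Ek_rec[OF assms] in simp)
    show ?case using Suc.IH b by (simp add: add.commute)
  qed
  then show ?thesis by simp
qed



lemma minus_one_pow_diff: assumes "j \<le> 2 * p" shows "(-1::'a::ring_1) ^ (2 * p - j) = (-1) ^ j"
proof -
  have "even (2 * p - j) = even j" using assms by presburger
  then show ?thesis by (simp add: minus_one_power_iff)
qed

lemma sinpow:
  fixes t :: real and p A :: nat
  assumes A: "2 * p \<le> A"
  shows "sin t ^ (2 * p) * sin (real A * t) =
    (-1) ^ p / 4 ^ p * (\<Sum>j = 0..2 * p. (-1) ^ j * real (2 * p choose j) * sin (real (A + 2 * j - 2 * p) * t))"
proof -
  define z where "z = cis t"
  have zi: "inverse z = cis (- t)" by (simp add: z_def)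
  have d: "z + (- inverse z) = 2 * \<i> * complex_of_real (sin t)" by (simp add: zi z_def complex_eq_iff)
  have bin: "(z + (- inverse z)) ^ (2 * p) = (\<Sum>j\<le>2 * p. of_nat (2 * p choose j) * z ^ j * (- inverse z) ^ (2 * p - j))"
    by (rule binomial_ring)
  have tm: "z ^ j * (- inverse z) ^ (2 * p - j) * z ^ A = (-1) ^ j * cis (real (A + 2 * j - 2 * p) * t)"
    if j: "j \<le> 2 * p" for j
  proof -
    have "z ^ j * (- inverse z) ^ (2 * p - j) * z ^ A = (-1) ^ (2 * p - j) * (z ^ j * (inverse z) ^ (2 * p - j) * z ^ A)"
      unfolding power_minus[of "inverse z"] by (simp only: mult_ac)
    also have "(-1::complex) ^ (2 * p - j) = (-1) ^ j" by (rule minus_one_pow_diff[OF j])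
    also have "z ^ j * (inverse z) ^ (2 * p - j) * z ^ A = cis (real j * t + real (2 * p - j) * (- t) + real A * t)"
      unfolding zi unfolding z_def unfolding Complex.DeMoivre cis_mult by simp
    also have "real j * t + real (2 * p - j) * (- t) + real A * t = real (A + 2 * j - 2 * p) * t"
      using j A by (simp add: of_nat_diff algebra_simps)
    finally show ?thesis .
  qed
  have four: "(2 * \<i>) ^ (2 * p) = (complex_of_real ((-4) ^ p))"
    by (simp add: power_mult power_mult_distrib)
  have main: "complex_of_real (sin t ^ (2 * p) * (-4) ^ p) * cis (real A * t) =
      (\<Sum>j = 0..2 * p. complex_of_real ((-1) ^ j * real (2 * p choose j)) * cis (real (A + 2 * j - 2 * p) * t))"
  proof -
    have "complex_of_real (sin t ^ (2 * p) * (-4) ^ p) * cis (real A * t) = (2 * \<i> * complex_of_real (sin t)) ^ (2 * p) * z ^ A"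
      unfolding power_mult_distrib[of "2 * \<i>"] four z_def Complex.DeMoivre by simp
    also have "\<dots> = (\<Sum>j\<le>2 * p. of_nat (2 * p choose j) * (z ^ j * (- inverse z) ^ (2 * p - j) * z ^ A))"
      unfolding d[symmetric] bin sum_distrib_right by (simp add: mult.assoc)
    also have "\<dots> = (\<Sum>j = 0..2 * p. complex_of_real ((-1) ^ j * real (2 * p choose j)) * cis (real (A + 2 * j - 2 * p) * t))"
      by (rule sum.cong) (auto simp: tm atLeast0AtMost)
    finally show ?thesis .
  qed
  have "sin t ^ (2 * p) * (-4) ^ p * sin (real A * t) = Im (complex_of_real (sin t ^ (2 * p) * (-4) ^ p) * cis (real A * t))"
    by simp
  also have "\<dots> = Im (\<Sum>j = 0..2 * p. complex_of_real ((-1) ^ j * real (2 * p choose j)) * cis (real (A + 2 * j - 2 * p) * t))"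
    by (rule arg_cong[where f=Im, OF main])
  also have "\<dots> = (\<Sum>j = 0..2 * p. (-1) ^ j * real (2 * p choose j) * sin (real (A + 2 * j - 2 * p) * t))"
    by simp
  finally have "sin t ^ (2 * p) * (-4) ^ p * sin (real A * t) = (\<Sum>j = 0..2 * p. (-1) ^ j * real (2 * p choose j) * sin (real (A + 2 * j - 2 * p) * t))" .
  then have h2: "(\<Sum>j = 0..2 * p. (-1) ^ j * real (2 * p choose j) * sin (real (A + 2 * j - 2 * p) * t)) = (sin t ^ (2 * p) * sin (real A * t)) * ((-1) ^ p * 4 ^ p)"
    by (simp add: power_mult_distrib[symmetric] mult_ac)
  have g: "\<And>a b L::real. b \<noteq> 0 \<Longrightarrow> a * a = 1 \<Longrightarrow> a / b * (L * (a * b)) = L"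
    by (simp add: divide_inverse mult_ac)
  show ?thesis unfolding h2 by (rule g[symmetric]) (simp_all add: minus_one_mult_self)
qed


definition cc :: "nat \<Rightarrow> nat \<Rightarrow> real" where
  "cc m j = (-1) ^ (m - 1) / 4 ^ (m - 1) * ((-1) ^ j * real ((2 * m - 2) choose j))"

lemma D_sin: assumes m: "m \<ge> 2" and s: "-1 \<le> s" "s \<le> 1"
  shows "chebU n s * (1 - s^2) powr (real m - 1/2) = sin (arccos s) ^ (2 * (m - 1)) * sin (real (n+1) * arccos s)"
proof (cases "s = 1 \<or> s = -1")
  case True
  then have "sin (arccos s) = 0" by auto
  then show ?thesis using m unfolding chebU_def by simp
next
  case False
  then have s1: "-1 < s" "s < 1" using s by auto
  define w where "w = sqrt (1 - s^2)"
  have s2: "0 < 1 - s^2" using s1 by (simp add: abs_square_less_1)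
  have w: "w > 0" "sin (arccos s) = w" "w^2 = 1 - s^2" using s2 s by (auto simp: w_def sin_arccos)
  have hm: "real m - 1/2 = real (m - 1) + 1/2" using m by (simp add: of_nat_diff)
  have "(1 - s^2) powr (real m - 1/2) = (1 - s^2) ^ (m - 1) * w"
    unfolding hm powr_add powr_realpow[OF s2] powr_half_sqrt[OF less_imp_le[OF s2]] w_def by (rule refl)
  also have "(1 - s^2) ^ (m - 1) = w ^ (2 * (m - 1))" unfolding w(3)[symmetric] by (simp add: power_mult)
  finally have p: "(1 - s^2) powr (real m - 1/2) = w ^ (2 * (m - 1)) * w" .
  show ?thesis unfolding chebU_def p w(2) using w(1) by (simp add: field_simps)
qed

lemma D_repr: assumes m: "m \<ge> 2" and n: "n \<ge> 2 * m" and s: "-1 \<le> s" "s \<le> 1"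
  shows "chebU n s * (1 - s^2) powr (real m - 1/2) = (\<Sum>j = 0..2 * m - 2. cc m j * fk (n + 2 - 2 * m + 2 * j) s)"
proof -
  have le: "2 * (m - 1) \<le> n + 1" using m n by simp
  have "chebU n s * (1 - s^2) powr (real m - 1/2) = sin (arccos s) ^ (2 * (m - 1)) * sin (real (n+1) * arccos s)"
    by (rule D_sin[OF m s])
  also have "\<dots> = (-1) ^ (m - 1) / 4 ^ (m - 1) * (\<Sum>j = 0..2 * (m - 1). (-1) ^ j * real (2 * (m - 1) choose j) * sin (real (n + 1 + 2 * j - 2 * (m - 1)) * arccos s))"
    by (rule sinpow[OF le])
  also have "\<dots> = (\<Sum>j = 0..2 * m - 2. cc m j * fk (n + 2 - 2 * m + 2 * j) s)"
    unfolding sum_distrib_left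
  proof (rule sum.cong)
    show "{0..2 * (m - 1)} = {0..2 * m - 2}" by (simp add: right_diff_distrib')
    fix j assume "j \<in> {0..2 * m - 2}"
    have e1: "n + 1 + 2 * j - (2 * m - 2) = n + 2 - 2 * m + 2 * j + 1" using m n by simp
    have e2: "2 * (m - 1) = 2 * m - 2" by simp
    show "(-1) ^ (m - 1) / 4 ^ (m - 1) * ((-1) ^ j * real (2 * (m - 1) choose j) * sin (real (n + 1 + 2 * j - 2 * (m - 1)) * arccos s)) =
        cc m j * fk (n + 2 - 2 * m + 2 * j) s"
      unfolding e2 unfolding e1 cc_def fk_def by simp
  qed
  finally show ?thesis .
qed

lemma Ek_sum: assumes "\<bar>r\<bar> < 1" "0 < e" and D: "\<And>s. -1 \<le> s \<Longrightarrow> s \<le> 1 \<Longrightarrow> D s = (\<Sum>j\<in>J. c j * fk (K j) s)"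
   and fin: "finite J"
  shows "Ek D r e = (\<Sum>j\<in>J. c j * Ek (fk (K j)) r e)"
proof -
  note iv = intervals[OF assms(1,2)]
  have gen: "integral {a..b} (\<lambda>s. D s / (s - r)) = (\<Sum>j\<in>J. c j * integral {a..b} (\<lambda>s. fk (K j) s / (s - r)))"
    if ab: "{a..b} \<subseteq> {-1..1}" "r \<notin> {a..b}" for a b
  proof -
    have "integral {a..b} (\<lambda>s. D s / (s - r)) = integral {a..b} (\<lambda>s. \<Sum>j\<in>J. c j * (fk (K j) s / (s - r)))"
    proof (rule integral_cong)
      fix s assume "s \<in> {a..b}"
      then have "-1 \<le> s" "s \<le> 1" using ab by auto
      then show "D s / (s - r) = (\<Sum>j\<in>J. c j * (fk (K j) s / (s - r)))"
        unfolding D[OF \<open>-1 \<le> s\<close> \<open>s \<le> 1\<close>] sum_divide_distrib by simp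
    qed
    also have "\<dots> = (\<Sum>j\<in>J. integral {a..b} (\<lambda>s. c j * (fk (K j) s / (s - r))))"
      by (rule integral_sum[OF fin]) (intro integrable_on_mult_right fkq_int[OF ab])
    also have "\<dots> = (\<Sum>j\<in>J. c j * integral {a..b} (\<lambda>s. fk (K j) s / (s - r)))"
      by (simp only: integral_mult_right)
    finally show ?thesis .
  qed
  show ?thesis unfolding Ek_def gen[OF iv(1,2)] gen[OF iv(3,4)] by (simp add: sum.distrib distrib_left)
qed

lemma cpv_D: assumes m: "m \<ge> 2" and n: "n \<ge> 2 * m" and r: "\<bar>r\<bar> < 1"
  shows "cpv (\<lambda>s. chebU n s * (1 - s^2) powr (real m - 1/2)) r =
     (\<Sum>j = 0..2 * m - 2. cc m j * (-pi * cos (real (n + 3 - 2 * m + 2 * j) * arccos r)))"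
proof -
  let ?D = "\<lambda>s. chebU n s * (1 - s^2) powr (real m - 1/2)"
  have l: "((\<lambda>e. \<Sum>j = 0..2 * m - 2. cc m j * Ek (fk (n + 2 - 2 * m + 2 * j)) r e) \<longlongrightarrow>
      (\<Sum>j = 0..2 * m - 2. cc m j * (-pi * cos (real (n + 2 - 2 * m + 2 * j + 1) * arccos r)))) (at_right 0)"
    by (intro tendsto_sum tendsto_mult_left PVk[OF r])
  have l2: "(Ek ?D r \<longlongrightarrow> (\<Sum>j = 0..2 * m - 2. cc m j * (-pi * cos (real (n + 2 - 2 * m + 2 * j + 1) * arccos r)))) (at_right 0)"
    by (rule Lim_transform_eventually[OF l], rule eventually_mono[OF ev_pos])
       (rule Ek_sum[OF r _ D_repr[OF m n], symmetric], auto)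
  have "cpv ?D r = Lim (at_right 0) (Ek ?D r)" unfolding cpv_def Ek_def[abs_def] by simp
  also have "\<dots> = (\<Sum>j = 0..2 * m - 2. cc m j * (-pi * cos (real (n + 2 - 2 * m + 2 * j + 1) * arccos r)))"
    by (rule tendsto_Lim[OF trivial_limit_at_right_real l2])
  also have "\<dots> = (\<Sum>j = 0..2 * m - 2. cc m j * (-pi * cos (real (n + 3 - 2 * m + 2 * j) * arccos r)))"
  proof (rule sum.cong[OF refl])
    fix j assume "j \<in> {0..2 * m - 2}"
    have "n + 2 - 2 * m + 2 * j + 1 = n + 3 - 2 * m + 2 * j" using n by simp
    then show "cc m j * (-pi * cos (real (n + 2 - 2 * m + 2 * j + 1) * arccos r)) = cc m j * (-pi * cos (real (n + 3 - 2 * m + 2 * j) * arccos r))"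
      by (simp only:)
  qed
  finally show ?thesis .
qed



lemma alg3: fixes N sN cN r w :: real assumes "w \<noteq> 0"
  shows "N * ((N+1) * ((sN * r - cN * w) / w) - (N-1) * ((sN * r + cN * w) / w)) = 2 * w^2 * (N * (r * sN - N * cN * w) / w^3)"
  using assms by (simp add: field_simps power2_eq_square power3_eq_cube)
lemma alg2: fixes a c s r w :: real assumes "w \<noteq> 0"
  shows "(a * (c * a * inverse (- w)) * w - a * s * (-(2 * r) / (2 * w))) / (w * w) = a * (r * s - a * c * w) / w^3"
  using assms by (simp add: field_simps power3_eq_cube)
lemma alg1: fixes a x w :: real assumes "w \<noteq> 0"
  shows "- x * a * inverse (- w) = a * x / w"
  using assms by (simp add: field_simps)
lemma const: fixes m :: nat assumes "m \<ge> 1"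
  shows "1/2 * ((-1) ^ (m - 1) / 4 ^ (m - 1)) * (-pi) = (-1) ^ m * (1/2) ^ (2 * m) * pi * 2"
proof -
  obtain k where k: "m = Suc k" using assms by (cases m) auto
  have f: "(4::real)^k = (2^k)^2" by (simp add: power2_eq_square power_mult_distrib[symmetric])
  show ?thesis unfolding k by (simp add: power_mult field_simps f)
qed
lemma fin_alg: fixes K s C T M Nx Y r :: real
  assumes "Nx * Y = 2 * (1 - r^2) * T" "1 - r^2 \<noteq> 0" "1/2 * K * (-pi) = M * pi * 2"
  shows "1/2 * (K * (s * C) * (-pi * T)) = M * (pi/(1-r^2)) * (s * C * Nx * Y)"
proof -
  have "M * (pi/(1-r^2)) * (s * C * Nx * Y) = M * (pi/(1-r^2)) * (s * C * (Nx * Y))" by (simp add: mult.assoc)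
  also have "\<dots> = M * (pi/(1-r^2)) * (s * C * (2 * (1 - r^2) * T))" using assms(1) by simp
  also have "\<dots> = (M * pi * 2) * (s * C * T)" using assms(2) by (simp add: field_simps)
  also have "\<dots> = (1/2 * K * (-pi)) * (s * C * T)" using assms(3) by simp
  also have "\<dots> = 1/2 * (K * (s * C) * (-pi * T))" by (simp add: algebra_simps)
  finally show ?thesis ..
qed

lemma dT1: assumes r: "\<bar>r\<bar> < 1"
  shows "((\<lambda>x. cos (a * arccos x)) has_real_derivative a * sin (a * arccos r) / sqrt (1 - r^2)) (at r)"
proof -
  have r1: "-1 < r" "r < 1" using r by auto
  have s2: "0 < 1 - r^2" using r by (simp add: abs_square_less_1)
  have w: "sqrt (1 - r^2) \<noteq> 0" using s2 by simp
  have d1: "((\<lambda>t. cos (a * t)) has_real_derivative - sin (a * arccos r) * a) (at (arccos r))"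
    by (auto intro!: derivative_eq_intros)
  from DERIV_chain2[OF d1 DERIV_arccos[OF r1]]
  have "((\<lambda>x. cos (a * arccos x)) has_real_derivative - sin (a * arccos r) * a * inverse (- sqrt (1 - r^2))) (at r)" .
  moreover have "- sin (a * arccos r) * a * inverse (- sqrt (1 - r^2)) = a * sin (a * arccos r) / sqrt (1 - r^2)"
    by (rule alg1[OF w])
  ultimately show ?thesis by metis
qed

lemma dT2: assumes r: "\<bar>r\<bar> < 1"
  shows "((\<lambda>x. a * sin (a * arccos x) / sqrt (1 - x^2)) has_real_derivative
     a * (r * sin (a * arccos r) - a * cos (a * arccos r) * sqrt (1 - r^2)) / sqrt (1 - r^2) ^ 3) (at r)"
proof -
  have r1: "-1 < r" "r < 1" using r by auto
  have s2: "0 < 1 - r^2" using r by (simp add: abs_square_less_1)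
  have w: "sqrt (1 - r^2) \<noteq> 0" using s2 by simp
  have d1: "((\<lambda>t. sin (a * t)) has_real_derivative cos (a * arccos r) * a) (at (arccos r))"
    by (auto intro!: derivative_eq_intros)
  from DERIV_chain2[OF d1 DERIV_arccos[OF r1]]
  have dS: "((\<lambda>x. sin (a * arccos x)) has_real_derivative cos (a * arccos r) * a * inverse (- sqrt (1 - r^2))) (at r)" .
  have dW: "((\<lambda>x. sqrt (1 - x^2)) has_real_derivative (-(2 * r) / (2 * sqrt (1 - r^2)))) (at r)"
    using s2 by (auto intro!: derivative_eq_intros simp: field_simps)
  from DERIV_divide[OF DERIV_cmult[OF dS, of a] dW w]
  have "((\<lambda>x. a * sin (a * arccos x) / sqrt (1 - x^2)) has_real_derivative
     (a * (cos (a * arccos r) * a * inverse (- sqrt (1 - r^2))) * sqrt (1 - r^2) - a * sin (a * arccos r) * (-(2 * r) / (2 * sqrt (1 - r^2)))) / (sqrt (1 - r^2) * sqrt (1 - r^2))) (at r)" .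
  moreover have "(a * (cos (a * arccos r) * a * inverse (- sqrt (1 - r^2))) * sqrt (1 - r^2) - a * sin (a * arccos r) * (-(2 * r) / (2 * sqrt (1 - r^2)))) / (sqrt (1 - r^2) * sqrt (1 - r^2))
      = a * (r * sin (a * arccos r) - a * cos (a * arccos r) * sqrt (1 - r^2)) / sqrt (1 - r^2) ^ 3"
    by (rule alg2[OF w])
  ultimately show ?thesis by metis
qed

definition NN :: "nat \<Rightarrow> nat \<Rightarrow> nat \<Rightarrow> real" where
  "NN n m j = real (n + 3 - 2 * m + 2 * j)"

definition g0 :: "nat \<Rightarrow> nat \<Rightarrow> real \<Rightarrow> real" where
  "g0 n m x = (\<Sum>j = 0..2 * m - 2. cc m j * (-pi * cos (NN n m j * arccos x)))"

definition g1 :: "nat \<Rightarrow> nat \<Rightarrow> real \<Rightarrow> real" where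
  "g1 n m x = (\<Sum>j = 0..2 * m - 2. cc m j * (-pi * (NN n m j * sin (NN n m j * arccos x) / sqrt (1 - x^2))))"

definition T2 :: "real \<Rightarrow> real \<Rightarrow> real" where
  "T2 a r = a * (r * sin (a * arccos r) - a * cos (a * arccos r) * sqrt (1 - r^2)) / sqrt (1 - r^2) ^ 3"

definition g2 :: "nat \<Rightarrow> nat \<Rightarrow> real \<Rightarrow> real" where
  "g2 n m x = (\<Sum>j = 0..2 * m - 2. cc m j * (-pi * T2 (NN n m j) x))"

lemma g0_deriv: assumes "\<bar>r\<bar> < 1" shows "(g0 n m has_real_derivative g1 n m r) (at r)"
  unfolding g0_def[abs_def] g1_def
  by (intro DERIV_sum DERIV_cmult dT1[OF assms])

lemma g1_deriv: assumes "\<bar>r\<bar> < 1" shows "(g1 n m has_real_derivative g2 n m r) (at r)"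
  unfolding g1_def[abs_def] g2_def T2_def
  by (intro DERIV_sum DERIV_cmult dT2[OF assms])

lemma keyid: assumes r: "\<bar>r\<bar> < 1" and N: "2 \<le> N"
  shows "real N * (real (N+1) * chebU (N-2) r - real (N-1) * chebU N r) = 2 * (1 - r^2) * T2 (real N) r"
proof -
  define t where "t = arccos r"
  define w where "w = sqrt (1 - r^2)"
  have s2: "0 < 1 - r^2" using r by (simp add: abs_square_less_1)
  have w: "w \<noteq> 0" "sin t = w" "cos t = r" "w^2 = 1 - r^2"
    using s2 r by (auto simp: w_def t_def sin_arccos)
  have a: "real (N - 2 + 1) * t = real N * t - t" using N by (simp add: of_nat_diff algebra_simps)
  have b: "real (N + 1) * t = real N * t + t" by (simp add: algebra_simps)
  have c: "real (N + 1) = real N + 1" "real (N - 1) = real N - 1" using N by (auto simp: of_nat_diff)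
  have u1: "chebU (N-2) r = (sin (real N * t) * r - cos (real N * t) * w) / w"
    unfolding chebU_def t_def[symmetric] a sin_diff w(2,3) by (rule refl)
  have u2: "chebU N r = (sin (real N * t) * r + cos (real N * t) * w) / w"
    unfolding chebU_def t_def[symmetric] b sin_add w(2,3) by (rule refl)
  have T: "T2 (real N) r = real N * (r * sin (real N * t) - real N * cos (real N * t) * w) / w ^ 3"
    unfolding T2_def t_def[symmetric] w_def[symmetric] by (rule refl)
  show ?thesis
    unfolding u1 u2 T c w(4)[symmetric]
    by (rule alg3[OF w(1)])
qed



lemma term_eq: assumes m: "m \<ge> 2" and n: "n \<ge> 2 * m" and r: "\<bar>r\<bar> < 1" and j: "j \<le> 2 * m - 2"
  shows "1/2 * (cc m j * (-pi * T2 (NN n m j) r)) =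
    (-1) ^ m * (1/2) ^ (2 * m) * (pi / (1 - r\<^sup>2)) *
    ((-1) ^ j * real ((2 * m - 2) choose j) *
       real (n + 3 - 2 * m + 2 * j) *
       (real (n + 4 - 2 * m + 2 * j) * chebU (n + 1 - 2 * m + 2 * j) r
        - real (n + 2 - 2 * m + 2 * j) * chebU (n + 3 - 2 * m + 2 * j) r))"
proof -
  define N where "N = n + 3 - 2 * m + 2 * j"
  have i1: "n + 4 - 2 * m + 2 * j = N + 1" using m n unfolding N_def by arith
  have i2: "n + 1 - 2 * m + 2 * j = N - 2" using m n unfolding N_def by arith
  have i3: "n + 2 - 2 * m + 2 * j = N - 1" using m n unfolding N_def by arith
  have N2: "2 \<le> N" using m n unfolding N_def by arith
  have NN: "NN n m j = real N" unfolding NN_def N_def ..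
  have "0 < 1 - r^2" using r by (simp add: abs_square_less_1)
  then have s2: "1 - r^2 \<noteq> 0" by simp
  have m1: "m \<ge> 1" using m by simp
  show ?thesis unfolding i1 i2 i3 N_def[symmetric] NN cc_def
    by (rule fin_alg[OF keyid[OF r N2] s2 const[OF m1]])
qed

theorem mainTheorem6:
  fixes m n :: nat and r :: real
  assumes "m \<ge> 2" and "n \<ge> 2 * m" and "\<bar>r\<bar> < 1"
  shows "hfp 3 (\<lambda>s. chebU n s * (1 - s\<^sup>2) powr (real m - 1/2)) r =
    (-1) ^ m * (1/2) ^ (2 * m) * (pi / (1 - r\<^sup>2)) *
    (\<Sum>j = 0..2 * m - 2. (-1) ^ j * real ((2 * m - 2) choose j) *
       real (n + 3 - 2 * m + 2 * j) *
       (real (n + 4 - 2 * m + 2 * j) * chebU (n + 1 - 2 * m + 2 * j) r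
        - real (n + 2 - 2 * m + 2 * j) * chebU (n + 3 - 2 * m + 2 * j) r))"
proof -
  define D where "D = (\<lambda>s. chebU n s * (1 - s\<^sup>2) powr (real m - 1/2))"
  let ?S = "{-1<..<(1::real)}"
  have oS: "open ?S" by simp
  have rS: "r \<in> ?S" using assms(3) by auto
  have cpvD: "cpv D x = g0 n m x" if "x \<in> ?S" for x
  proof -
    have "\<bar>x\<bar> < 1" using that by auto
    from cpv_D[OF assms(1,2) this] show ?thesis unfolding D_def g0_def NN_def .
  qed
  have h1: "hfp (Suc 0) D = cpv D" by (rule ext) simp
  have h2: "hfp (Suc (Suc 0)) D x = g1 n m x" if x: "x \<in> ?S" for x
  proof -
    have ax: "\<bar>x\<bar> < 1" using x by auto
    have "(cpv D has_real_derivative g1 n m x) (at x)"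
      by (rule has_field_derivative_transform_within_open[OF g0_deriv[OF ax] oS x]) (simp add: cpvD)
    then have "deriv (cpv D) x = g1 n m x" by (rule DERIV_imp_deriv)
    then show ?thesis by (simp add: h1)
  qed
  have "(hfp (Suc (Suc 0)) D has_real_derivative g2 n m r) (at r)"
    by (rule has_field_derivative_transform_within_open[OF g1_deriv[OF assms(3)] oS rS]) (erule h2[symmetric])
  then have d2: "deriv (hfp (Suc (Suc 0)) D) r = g2 n m r" by (rule DERIV_imp_deriv)
  have "hfp 3 D r = 1/2 * deriv (hfp (Suc (Suc 0)) D) r" by (simp add: numeral_3_eq_3)
  also have "\<dots> = 1/2 * g2 n m r" by (simp only: d2)
  also have "\<dots> = (-1) ^ m * (1/2) ^ (2 * m) * (pi / (1 - r\<^sup>2)) *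
    (\<Sum>j = 0..2 * m - 2. (-1) ^ j * real ((2 * m - 2) choose j) *
       real (n + 3 - 2 * m + 2 * j) *
       (real (n + 4 - 2 * m + 2 * j) * chebU (n + 1 - 2 * m + 2 * j) r
        - real (n + 2 - 2 * m + 2 * j) * chebU (n + 3 - 2 * m + 2 * j) r))"
    unfolding g2_def sum_distrib_left
    by (rule sum.cong[OF refl], rule term_eq[OF assms], simp)
  finally show ?thesis unfolding D_def .
qed


end
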